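(* Let $K$ be a field. Let $(L,M,N,P,h,\lambda,\lambda',\mu,\nu)$ be a Hopf crossed square of cocommutative Hopf algebras over $K$. Define $M\otimes L\to L$ by $m\otimes l\mapsto \mu(m)\triangleright l$ and $N\otimes L\to L$ by $n\otimes l\mapsto \nu(n)\triangleright l$. Then with these actions (and the given $P$-actions on $L,M,N$ and the given $h$), $(L,M,N,P,h)$ is a Hopf $2$-action; moreover every morphism of Hopf crossed squares is a morphism of the corresponding Hopf $2$-actions. Hence the category $\mathsf{X}^2(\mathsf{Hopf}_{K,coc})$ of Hopf crossed squares is a subcategory of the category $\mathsf{Act}^2(\mathsf{Hopf}_{K,coc})$ of Hopf $2$-actions.
   Context: All Hopf algebras are cocommutative over $K$; Sweedler notation $\Delta(x)=x_1\otimes x_2$, antipode $S$, counit $\epsilon$. For a cocommutative Hopf algebra $B$, a $B$-module Hopf algebra is a Hopf algebra $X$ with a linear map $B\otimes X\to X$, $b\otimes x\mapsto b\triangleright x$, satisfying $(bb')\triangleright x=b\triangleright(b'\triangleright x)$, $1_B\triangleright x=x$, $b\triangleright(xy)=(b_1\triangleright x)(b_2\triangleright y)$, $b\triangleright 1_X=\epsilon(b)1_X$, $\Delta(b\triangleright x)=b_1\triangleright x_1\otimes b_2\triangleright x_2$, $\epsilon(b\triangleright x)=\epsilon(b)\epsilon(x)$. A Hopf crossed module $(B,X,d)$ is a $B$-module Hopf algebra $X$ with a Hopf algebra morphism $d\colon X\to B$ such that $d(b\triangleright x)=b_1d(x)S(b_2)$ and $d(y)\triangleright x=y_1xS(y_2)$.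 A Hopf crossed square $(L,M,N,P,h,\lambda,\lambda',\mu,\nu)$ is a commutative square of Hopf algebra morphisms $\lambda\colon L\to M$, $\lambda'\colon L\to N$, $\mu\colon M\to P$, $\nu\colon N\to P$ ($\mu\lambda=\nu\lambda'$), where $L,M,N$ are $P$-module Hopf algebras and $h\colon M\otimes N\to L$ is a coalgebra map such that for all $l\in L$, $m,m'\in M$, $n,n'\in N$, $p\in P$: (CS1) $(P,M,\mu)$, $(P,N,\nu)$, $(P,L,\mu\lambda)$ are Hopf crossed modules; (CS2) $\lambda,\lambda'$ are $P$-linear; (CS3) $h$ is $P$-linear, i.e. $h(p_1\triangleright m\otimes p_2\triangleright n)=p\triangleright h(m\otimes n)$; (CS4) $\lambda h(m\otimes n)=m_1(\nu(n)\triangleright S(m_2))$ and $\lambda' h(m\otimes n)=(\mu(m)\triangleright n_1)S(n_2)$; (CS5) $h(\lambda(l)\otimes n)=l_1(\nu(n)\triangleright S(l_2))$ and $h(m\otimes\lambda'(l))=(\mu(m)\triangleright l_1)S(l_2)$; (CS6) $h(m\otimes nn')=h(m_1\otimes n_1)(\nu(n_2)\triangleright h(m_2\otimes n'))$ and $h(mm'\otimes n)=(\mu(m_1)\triangleright h(m'\otimes n_1))h(m_2\otimes n_2)$. A morphism of Hopf crossed squares is a quadruple of Hopf algebra morphisms $\alpha\colon L\to\hat L$, $\beta\colon M\to\hat M$, $\gamma\colon N\to\hat N$, $\delta\colon P\to\hat P$ commuting with $\lambda,\lambda',\mu,\nu$ and their hatted versions, with $\alpha(p\triangleright l)=\delta(p)\triangleright\alpha(l)$,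 $\beta(p\triangleright m)=\delta(p)\triangleright\beta(m)$, $\gamma(p\triangleright n)=\delta(p)\triangleright\gamma(n)$, and $\alpha h=\hat h(\beta\otimes\gamma)$. A Hopf $2$-action $(L,M,N,P,h)$ consists of cocommutative Hopf algebras $L,M,N,P$ such that $L,M,N$ are $P$-module Hopf algebras, $L$ is an $M$-module Hopf algebra and an $N$-module Hopf algebra, and a coalgebra morphism $h\colon M\otimes N\to L$, such that for all $m,m'\in M$, $n,n'\in N$, $l\in L$, $p\in P$: (2A1) $(p_1\triangleright m)\triangleright(p_2\triangleright l)=p\triangleright(m\triangleright l)$ and $(p_1\triangleright n)\triangleright(p_2\triangleright l)=p\triangleright(n\triangleright l)$; (2A2) $h$ is $P$-linear; (2A3) $h(1_M\otimes n)=\epsilon(n)1_L$, $h(m\otimes 1_N)=\epsilon(m)1_L$; (2A4) $h(m\otimes nn')=h(m_1\otimes n_1)(n_2\triangleright h(m_2\otimes n'))$ and $h(mm'\otimes n)=(m_1\triangleright h(m'\otimes n_1))h(m_2\otimes n_2)$; (2A5) $(m_1\triangleright(n_1\triangleright l))h(m_2\otimes n_2)=h(m_1\otimes n_1)(n_2\triangleright(m_2\triangleright l))$. A morphism of Hopf $2$-actions $(L,M,N,P,h)\to(L',M',N',P',h')$ is a quadruple of Hopf algebra morphisms $\alpha\colon L\to L'$, $\beta\colon M\to M'$, $\gamma\colon N\to N'$, $\delta\colon P\to P'$ with $\alpha(p\triangleright l)=\delta(p)\triangleright\alpha(l)$, $\alpha(m\triangleright l)=\beta(m)\triangleright\alpha(l)$,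 $\alpha(n\triangleright l)=\gamma(n)\triangleright\alpha(l)$, $\beta(p\triangleright m)=\delta(p)\triangleright\beta(m)$, $\gamma(p\triangleright n)=\delta(p)\triangleright\gamma(n)$, and $\alpha h=h'(\beta\otimes\gamma)$. *)

theory Defs
  imports Complex_Main
begin

text \<open>Elements of tensor products are
  represented by finite lists of simple tensors (finite sums). Two such lists denote the
  same tensor iff they cannot be separated by products of linear functionals, which over a
  field is exactly equality in the algebraic tensor product.\<close>

record ('k, 'a) hopf =
  hscale :: "'k \<Rightarrow> 'a \<Rightarrow> 'a"
  hmult :: "'a \<Rightarrow> 'a \<Rightarrow> 'a"
  hunit :: 'a
  hcomult :: "'a \<Rightarrow> ('a \<times> 'a) list"
  hcounit :: "'a \<Rightarrow> 'k"
  hantipode :: "'a \<Rightarrow> 'a"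

definition lin_functional :: "('k::field \<Rightarrow> 'a::ab_group_add \<Rightarrow> 'a) \<Rightarrow> ('a \<Rightarrow> 'k) \<Rightarrow> bool" where
  "lin_functional s \<phi> \<longleftrightarrow> Vector_Spaces.linear s (*) \<phi>"

definition teq2 :: "('k::field \<Rightarrow> 'a::ab_group_add \<Rightarrow> 'a) \<Rightarrow> ('k \<Rightarrow> 'b::ab_group_add \<Rightarrow> 'b)
    \<Rightarrow> ('a \<times> 'b) list \<Rightarrow> ('a \<times> 'b) list \<Rightarrow> bool" where
  "teq2 sa sb xs ys \<longleftrightarrow>
     (\<forall>\<phi> \<psi>. lin_functional sa \<phi> \<and> lin_functional sb \<psi> \<longrightarrow>
        (\<Sum>(a, b) \<leftarrow> xs. \<phi> a * \<psi> b) = (\<Sum>(a, b) \<leftarrow> ys. \<phi> a * \<psi> b))"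

definition teq3 :: "('k::field \<Rightarrow> 'a::ab_group_add \<Rightarrow> 'a)
    \<Rightarrow> ('a \<times> 'a \<times> 'a) list \<Rightarrow> ('a \<times> 'a \<times> 'a) list \<Rightarrow> bool" where
  "teq3 s xs ys \<longleftrightarrow>
     (\<forall>\<phi> \<psi> \<chi>. lin_functional s \<phi> \<and> lin_functional s \<psi> \<and> lin_functional s \<chi> \<longrightarrow>
        (\<Sum>(a, b, c) \<leftarrow> xs. \<phi> a * \<psi> b * \<chi> c) = (\<Sum>(a, b, c) \<leftarrow> ys. \<phi> a * \<psi> b * \<chi> c))"

definition bilinear_map :: "('k::field \<Rightarrow> 'a::ab_group_add \<Rightarrow> 'a) \<Rightarrow> ('k \<Rightarrow> 'b::ab_group_add \<Rightarrow> 'b)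
    \<Rightarrow> ('k \<Rightarrow> 'c::ab_group_add \<Rightarrow> 'c) \<Rightarrow> ('a \<Rightarrow> 'b \<Rightarrow> 'c) \<Rightarrow> bool" where
  "bilinear_map sa sb sc f \<longleftrightarrow>
     (\<forall>b. Vector_Spaces.linear sa sc (\<lambda>a. f a b)) \<and> (\<forall>a. Vector_Spaces.linear sb sc (\<lambda>b. f a b))"

definition cc_hopf :: "('k::field, 'a::ab_group_add) hopf \<Rightarrow> bool" where
  "cc_hopf H \<longleftrightarrow>
     (let s = hscale H; mul = hmult H; u = hunit H; \<Delta> = hcomult H;
          \<epsilon> = hcounit H; S = hantipode H in
       vector_space s
     \<comment> \<open>unital associative K-algebra\<close>
     \<and> bilinear_map s s s mul
     \<and> (\<forall>x y z. mul (mul x y) z = mul x (mul y z))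
     \<and> (\<forall>x. mul u x = x \<and> mul x u = x)
     \<comment> \<open>coassociative counital K-coalgebra\<close>
     \<and> (\<forall>x y. teq2 s s (\<Delta> (x + y)) (\<Delta> x @ \<Delta> y))
     \<and> (\<forall>c x. teq2 s s (\<Delta> (s c x)) (map (\<lambda>(a, b). (s c a, b)) (\<Delta> x)))
     \<and> (\<forall>x. teq3 s [(a, b1, b2). (a, b) \<leftarrow> \<Delta> x, (b1, b2) \<leftarrow> \<Delta> b]
                    [(a1, a2, b). (a, b) \<leftarrow> \<Delta> x, (a1, a2) \<leftarrow> \<Delta> a])
     \<and> lin_functional s \<epsilon>
     \<and> (\<forall>x. (\<Sum>(a, b) \<leftarrow> \<Delta> x. s (\<epsilon> a) b) = x \<and> (\<Sum>(a, b) \<leftarrow> \<Delta> x. s (\<epsilon> b) a) = x)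
     \<comment> \<open>bialgebra compatibility\<close>
     \<and> (\<forall>x y. teq2 s s (\<Delta> (mul x y)) [(mul a c, mul b d). (a, b) \<leftarrow> \<Delta> x, (c, d) \<leftarrow> \<Delta> y])
     \<and> teq2 s s (\<Delta> u) [(u, u)]
     \<and> (\<forall>x y. \<epsilon> (mul x y) = \<epsilon> x * \<epsilon> y)
     \<and> \<epsilon> u = 1
     \<comment> \<open>antipode\<close>
     \<and> Vector_Spaces.linear s s S
     \<and> (\<forall>x. (\<Sum>(a, b) \<leftarrow> \<Delta> x. mul a (S b)) = s (\<epsilon> x) u
           \<and> (\<Sum>(a, b) \<leftarrow> \<Delta> x. mul (S a) b) = s (\<epsilon> x) u)
     \<comment> \<open>cocommutativity\<close>
     \<and> (\<forall>x. teq2 s s (\<Delta> x) (map (\<lambda>(a, b). (b, a)) (\<Delta> x))))"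

definition hopf_morphism :: "('k::field, 'a::ab_group_add) hopf \<Rightarrow> ('k, 'b::ab_group_add) hopf
    \<Rightarrow> ('a \<Rightarrow> 'b) \<Rightarrow> bool" where
  "hopf_morphism A B f \<longleftrightarrow>
     Vector_Spaces.linear (hscale A) (hscale B) f
     \<and> (\<forall>x y. f (hmult A x y) = hmult B (f x) (f y))
     \<and> f (hunit A) = hunit B
     \<and> (\<forall>x. teq2 (hscale B) (hscale B) (hcomult B (f x)) (map (\<lambda>(a, b). (f a, f b)) (hcomult A x)))
     \<and> (\<forall>x. hcounit B (f x) = hcounit A x)"

definition module_hopf :: "('k::field, 'b::ab_group_add) hopf \<Rightarrow> ('k, 'x::ab_group_add) hopf
    \<Rightarrow> ('b \<Rightarrow> 'x \<Rightarrow> 'x) \<Rightarrow> bool" where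
  "module_hopf B X act \<longleftrightarrow>
     bilinear_map (hscale B) (hscale X) (hscale X) act
     \<and> (\<forall>b b' x. act (hmult B b b') x = act b (act b' x))
     \<and> (\<forall>x. act (hunit B) x = x)
     \<and> (\<forall>b x y. act b (hmult X x y) = (\<Sum>(b1, b2) \<leftarrow> hcomult B b. hmult X (act b1 x) (act b2 y)))
     \<and> (\<forall>b. act b (hunit X) = hscale X (hcounit B b) (hunit X))
     \<and> (\<forall>b x. teq2 (hscale X) (hscale X) (hcomult X (act b x))
                [(act b1 x1, act b2 x2). (b1, b2) \<leftarrow> hcomult B b, (x1, x2) \<leftarrow> hcomult X x])
     \<and> (\<forall>b x. hcounit X (act b x) = hcounit B b * hcounit X x)"

definition hopf_crossed_module :: "('k::field, 'b::ab_group_add) hopf \<Rightarrow> ('k, 'x::ab_group_add) hopf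
    \<Rightarrow> ('b \<Rightarrow> 'x \<Rightarrow> 'x) \<Rightarrow> ('x \<Rightarrow> 'b) \<Rightarrow> bool" where
  "hopf_crossed_module B X act d \<longleftrightarrow>
     module_hopf B X act \<and> hopf_morphism X B d
     \<and> (\<forall>b x. d (act b x) = (\<Sum>(b1, b2) \<leftarrow> hcomult B b. hmult B (hmult B b1 (d x)) (hantipode B b2)))
     \<and> (\<forall>y x. act (d y) x = (\<Sum>(y1, y2) \<leftarrow> hcomult X y. hmult X (hmult X y1 x) (hantipode X y2)))"

definition coalg_map2 :: "('k::field, 'm::ab_group_add) hopf \<Rightarrow> ('k, 'n::ab_group_add) hopf
    \<Rightarrow> ('k, 'l::ab_group_add) hopf \<Rightarrow> ('m \<Rightarrow> 'n \<Rightarrow> 'l) \<Rightarrow> bool" where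
  "coalg_map2 M N L h \<longleftrightarrow>
     bilinear_map (hscale M) (hscale N) (hscale L) h
     \<and> (\<forall>m n. teq2 (hscale L) (hscale L) (hcomult L (h m n))
                [(h m1 n1, h m2 n2). (m1, m2) \<leftarrow> hcomult M m, (n1, n2) \<leftarrow> hcomult N n])
     \<and> (\<forall>m n. hcounit L (h m n) = hcounit M m * hcounit N n)"

definition hopf_crossed_square ::
  "('k::field, 'l::ab_group_add) hopf \<Rightarrow> ('k, 'm::ab_group_add) hopf \<Rightarrow> ('k, 'n::ab_group_add) hopf
   \<Rightarrow> ('k, 'p::ab_group_add) hopf
   \<Rightarrow> ('p \<Rightarrow> 'l \<Rightarrow> 'l) \<Rightarrow> ('p \<Rightarrow> 'm \<Rightarrow> 'm) \<Rightarrow> ('p \<Rightarrow> 'n \<Rightarrow> 'n)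
   \<Rightarrow> ('m \<Rightarrow> 'n \<Rightarrow> 'l) \<Rightarrow> ('l \<Rightarrow> 'm) \<Rightarrow> ('l \<Rightarrow> 'n) \<Rightarrow> ('m \<Rightarrow> 'p) \<Rightarrow> ('n \<Rightarrow> 'p) \<Rightarrow> bool" where
  "hopf_crossed_square L M N P actL actM actN h lam lam' mu nu \<longleftrightarrow>
     cc_hopf L \<and> cc_hopf M \<and> cc_hopf N \<and> cc_hopf P
     \<and> hopf_morphism L M lam \<and> hopf_morphism L N lam' \<and> hopf_morphism M P mu \<and> hopf_morphism N P nu
     \<and> (\<forall>l. mu (lam l) = nu (lam' l))
     \<and> module_hopf P L actL \<and> module_hopf P M actM \<and> module_hopf P N actN
     \<and> coalg_map2 M N L h
     \<comment> \<open>CS1\<close>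
     \<and> hopf_crossed_module P M actM mu \<and> hopf_crossed_module P N actN nu
     \<and> hopf_crossed_module P L actL (mu \<circ> lam)
     \<comment> \<open>CS2\<close>
     \<and> (\<forall>p l. lam (actL p l) = actM p (lam l)) \<and> (\<forall>p l. lam' (actL p l) = actN p (lam' l))
     \<comment> \<open>CS3\<close>
     \<and> (\<forall>p m n. (\<Sum>(p1, p2) \<leftarrow> hcomult P p. h (actM p1 m) (actN p2 n)) = actL p (h m n))
     \<comment> \<open>CS4\<close>
     \<and> (\<forall>m n. lam (h m n) = (\<Sum>(m1, m2) \<leftarrow> hcomult M m. hmult M m1 (actM (nu n) (hantipode M m2))))
     \<and> (\<forall>m n. lam' (h m n) = (\<Sum>(n1, n2) \<leftarrow> hcomult N n. hmult N (actN (mu m) n1) (hantipode N n2)))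
     \<comment> \<open>CS5\<close>
     \<and> (\<forall>l n. h (lam l) n = (\<Sum>(l1, l2) \<leftarrow> hcomult L l. hmult L l1 (actL (nu n) (hantipode L l2))))
     \<and> (\<forall>m l. h m (lam' l) = (\<Sum>(l1, l2) \<leftarrow> hcomult L l. hmult L (actL (mu m) l1) (hantipode L l2)))
     \<comment> \<open>CS6\<close>
     \<and> (\<forall>m n n'. h m (hmult N n n') =
          (\<Sum>(m1, m2) \<leftarrow> hcomult M m. \<Sum>(n1, n2) \<leftarrow> hcomult N n.
              hmult L (h m1 n1) (actL (nu n2) (h m2 n'))))
     \<and> (\<forall>m m' n. h (hmult M m m') n =
          (\<Sum>(m1, m2) \<leftarrow> hcomult M m. \<Sum>(n1, n2) \<leftarrow> hcomult N n.
              hmult L (actL (mu m1) (h m' n1)) (h m2 n2)))"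

definition hopf_crossed_square_morphism ::
  "('k::field, 'l::ab_group_add) hopf \<Rightarrow> ('k, 'm::ab_group_add) hopf \<Rightarrow> ('k, 'n::ab_group_add) hopf
   \<Rightarrow> ('k, 'p::ab_group_add) hopf
   \<Rightarrow> ('p \<Rightarrow> 'l \<Rightarrow> 'l) \<Rightarrow> ('p \<Rightarrow> 'm \<Rightarrow> 'm) \<Rightarrow> ('p \<Rightarrow> 'n \<Rightarrow> 'n)
   \<Rightarrow> ('m \<Rightarrow> 'n \<Rightarrow> 'l) \<Rightarrow> ('l \<Rightarrow> 'm) \<Rightarrow> ('l \<Rightarrow> 'n) \<Rightarrow> ('m \<Rightarrow> 'p) \<Rightarrow> ('n \<Rightarrow> 'p)
   \<Rightarrow> ('k, 'l2::ab_group_add) hopf \<Rightarrow> ('k, 'm2::ab_group_add) hopf \<Rightarrow> ('k, 'n2::ab_group_add) hopf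
   \<Rightarrow> ('k, 'p2::ab_group_add) hopf
   \<Rightarrow> ('p2 \<Rightarrow> 'l2 \<Rightarrow> 'l2) \<Rightarrow> ('p2 \<Rightarrow> 'm2 \<Rightarrow> 'm2) \<Rightarrow> ('p2 \<Rightarrow> 'n2 \<Rightarrow> 'n2)
   \<Rightarrow> ('m2 \<Rightarrow> 'n2 \<Rightarrow> 'l2) \<Rightarrow> ('l2 \<Rightarrow> 'm2) \<Rightarrow> ('l2 \<Rightarrow> 'n2) \<Rightarrow> ('m2 \<Rightarrow> 'p2) \<Rightarrow> ('n2 \<Rightarrow> 'p2)
   \<Rightarrow> ('l \<Rightarrow> 'l2) \<Rightarrow> ('m \<Rightarrow> 'm2) \<Rightarrow> ('n \<Rightarrow> 'n2) \<Rightarrow> ('p \<Rightarrow> 'p2) \<Rightarrow> bool" where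
  "hopf_crossed_square_morphism L M N P actL actM actN h lam lam' mu nu
       L2 M2 N2 P2 actL2 actM2 actN2 h2 lam2 lam2' mu2 nu2 \<alpha> \<beta> \<gamma> \<delta> \<longleftrightarrow>
     hopf_morphism L L2 \<alpha> \<and> hopf_morphism M M2 \<beta> \<and> hopf_morphism N N2 \<gamma> \<and> hopf_morphism P P2 \<delta>
     \<and> (\<forall>l. \<beta> (lam l) = lam2 (\<alpha> l)) \<and> (\<forall>l. \<gamma> (lam' l) = lam2' (\<alpha> l))
     \<and> (\<forall>m. \<delta> (mu m) = mu2 (\<beta> m)) \<and> (\<forall>n. \<delta> (nu n) = nu2 (\<gamma> n))
     \<and> (\<forall>p l. \<alpha> (actL p l) = actL2 (\<delta> p) (\<alpha> l))
     \<and> (\<forall>p m. \<beta> (actM p m) = actM2 (\<delta> p) (\<beta> m))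
     \<and> (\<forall>p n. \<gamma> (actN p n) = actN2 (\<delta> p) (\<gamma> n))
     \<and> (\<forall>m n. \<alpha> (h m n) = h2 (\<beta> m) (\<gamma> n))"

definition hopf_2action ::
  "('k::field, 'l::ab_group_add) hopf \<Rightarrow> ('k, 'm::ab_group_add) hopf \<Rightarrow> ('k, 'n::ab_group_add) hopf
   \<Rightarrow> ('k, 'p::ab_group_add) hopf
   \<Rightarrow> ('p \<Rightarrow> 'l \<Rightarrow> 'l) \<Rightarrow> ('p \<Rightarrow> 'm \<Rightarrow> 'm) \<Rightarrow> ('p \<Rightarrow> 'n \<Rightarrow> 'n)
   \<Rightarrow> ('m \<Rightarrow> 'l \<Rightarrow> 'l) \<Rightarrow> ('n \<Rightarrow> 'l \<Rightarrow> 'l) \<Rightarrow> ('m \<Rightarrow> 'n \<Rightarrow> 'l) \<Rightarrow> bool" where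
  "hopf_2action L M N P actPL actPM actPN actML actNL h \<longleftrightarrow>
     cc_hopf L \<and> cc_hopf M \<and> cc_hopf N \<and> cc_hopf P
     \<and> module_hopf P L actPL \<and> module_hopf P M actPM \<and> module_hopf P N actPN
     \<and> module_hopf M L actML \<and> module_hopf N L actNL
     \<and> coalg_map2 M N L h
     \<comment> \<open>2A1\<close>
     \<and> (\<forall>p m l. (\<Sum>(p1, p2) \<leftarrow> hcomult P p. actML (actPM p1 m) (actPL p2 l)) = actPL p (actML m l))
     \<and> (\<forall>p n l. (\<Sum>(p1, p2) \<leftarrow> hcomult P p. actNL (actPN p1 n) (actPL p2 l)) = actPL p (actNL n l))
     \<comment> \<open>2A2\<close>
     \<and> (\<forall>p m n. (\<Sum>(p1, p2) \<leftarrow> hcomult P p. h (actPM p1 m) (actPN p2 n)) = actPL p (h m n))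
     \<comment> \<open>2A3\<close>
     \<and> (\<forall>n. h (hunit M) n = hscale L (hcounit N n) (hunit L))
     \<and> (\<forall>m. h m (hunit N) = hscale L (hcounit M m) (hunit L))
     \<comment> \<open>2A4\<close>
     \<and> (\<forall>m n n'. h m (hmult N n n') =
          (\<Sum>(m1, m2) \<leftarrow> hcomult M m. \<Sum>(n1, n2) \<leftarrow> hcomult N n.
              hmult L (h m1 n1) (actNL n2 (h m2 n'))))
     \<and> (\<forall>m m' n. h (hmult M m m') n =
          (\<Sum>(m1, m2) \<leftarrow> hcomult M m. \<Sum>(n1, n2) \<leftarrow> hcomult N n.
              hmult L (actML m1 (h m' n1)) (h m2 n2)))
     \<comment> \<open>2A5\<close>
     \<and> (\<forall>m n l.
          (\<Sum>(m1, m2) \<leftarrow> hcomult M m. \<Sum>(n1, n2) \<leftarrow> hcomult N n.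
              hmult L (actML m1 (actNL n1 l)) (h m2 n2)) =
          (\<Sum>(m1, m2) \<leftarrow> hcomult M m. \<Sum>(n1, n2) \<leftarrow> hcomult N n.
              hmult L (h m1 n1) (actNL n2 (actML m2 l))))"

definition hopf_2action_morphism ::
  "('k::field, 'l::ab_group_add) hopf \<Rightarrow> ('k, 'm::ab_group_add) hopf \<Rightarrow> ('k, 'n::ab_group_add) hopf
   \<Rightarrow> ('k, 'p::ab_group_add) hopf
   \<Rightarrow> ('p \<Rightarrow> 'l \<Rightarrow> 'l) \<Rightarrow> ('p \<Rightarrow> 'm \<Rightarrow> 'm) \<Rightarrow> ('p \<Rightarrow> 'n \<Rightarrow> 'n)
   \<Rightarrow> ('m \<Rightarrow> 'l \<Rightarrow> 'l) \<Rightarrow> ('n \<Rightarrow> 'l \<Rightarrow> 'l) \<Rightarrow> ('m \<Rightarrow> 'n \<Rightarrow> 'l)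
   \<Rightarrow> ('k, 'l2::ab_group_add) hopf \<Rightarrow> ('k, 'm2::ab_group_add) hopf \<Rightarrow> ('k, 'n2::ab_group_add) hopf
   \<Rightarrow> ('k, 'p2::ab_group_add) hopf
   \<Rightarrow> ('p2 \<Rightarrow> 'l2 \<Rightarrow> 'l2) \<Rightarrow> ('p2 \<Rightarrow> 'm2 \<Rightarrow> 'm2) \<Rightarrow> ('p2 \<Rightarrow> 'n2 \<Rightarrow> 'n2)
   \<Rightarrow> ('m2 \<Rightarrow> 'l2 \<Rightarrow> 'l2) \<Rightarrow> ('n2 \<Rightarrow> 'l2 \<Rightarrow> 'l2) \<Rightarrow> ('m2 \<Rightarrow> 'n2 \<Rightarrow> 'l2)
   \<Rightarrow> ('l \<Rightarrow> 'l2) \<Rightarrow> ('m \<Rightarrow> 'm2) \<Rightarrow> ('n \<Rightarrow> 'n2) \<Rightarrow> ('p \<Rightarrow> 'p2) \<Rightarrow> bool" where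
  "hopf_2action_morphism L M N P actPL actPM actPN actML actNL h
       L2 M2 N2 P2 actPL2 actPM2 actPN2 actML2 actNL2 h2 \<alpha> \<beta> \<gamma> \<delta> \<longleftrightarrow>
     hopf_morphism L L2 \<alpha> \<and> hopf_morphism M M2 \<beta> \<and> hopf_morphism N N2 \<gamma> \<and> hopf_morphism P P2 \<delta>
     \<and> (\<forall>p l. \<alpha> (actPL p l) = actPL2 (\<delta> p) (\<alpha> l))
     \<and> (\<forall>m l. \<alpha> (actML m l) = actML2 (\<beta> m) (\<alpha> l))
     \<and> (\<forall>n l. \<alpha> (actNL n l) = actNL2 (\<gamma> n) (\<alpha> l))
     \<and> (\<forall>p m. \<beta> (actPM p m) = actPM2 (\<delta> p) (\<beta> m))
     \<and> (\<forall>p n. \<gamma> (actPN p n) = actPN2 (\<delta> p) (\<gamma> n))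
     \<and> (\<forall>m n. \<alpha> (h m n) = h2 (\<beta> m) (\<gamma> n))"

end

theory Submission
  imports Defs
begin

abbreviation lin where "lin \<equiv> Vector_Spaces.linear"

lemma lin_vs1: "lin s t f \<Longrightarrow> vector_space s" by (simp add: Vector_Spaces.linear_iff)
lemma lin_vs2: "lin s t f \<Longrightarrow> vector_space t" by (simp add: Vector_Spaces.linear_iff)
lemma lin_add: "lin s t f \<Longrightarrow> f (x + y) = f x + f y" by (simp add: Vector_Spaces.linear_iff)
lemma lin_scale: "lin s t f \<Longrightarrow> f (s c x) = t c (f x)" by (simp add: Vector_Spaces.linear_iff)
lemma lin_zero: "lin s t f \<Longrightarrow> f 0 = 0"
  by (metis add_cancel_right_right lin_add)

lemma lin_sum_list: "lin s t f \<Longrightarrow> f (\<Sum>x\<leftarrow>xs. g x) = (\<Sum>x\<leftarrow>xs. f (g x))"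
  by (induction xs) (simp_all add: lin_zero lin_add)

lemma lin_sum: "lin s t f \<Longrightarrow> f (\<Sum>x\<in>E. g x) = (\<Sum>x\<in>E. f (g x))"
  by (induction E rule: infinite_finite_induct) (simp_all add: lin_zero lin_add)

lemma vs_scale_zero_left: "vector_space t \<Longrightarrow> t 0 x = 0"
  by (metis add_cancel_right_right comm_semiring_class.distrib add_0 vector_space.vector_space_assms(2))
lemma vs_scale_zero_right: "vector_space t \<Longrightarrow> t c 0 = 0"
  by (metis add_cancel_right_right add_0 vector_space.vector_space_assms(1))

lemma scale_sum_list_left: "vector_space t \<Longrightarrow> t (\<Sum>x\<leftarrow>xs. c x) v = (\<Sum>x\<leftarrow>xs. t (c x) v)"
  by (induction xs) (simp_all add: vs_scale_zero_left vector_space.vector_space_assms(2))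
lemma scale_sum_list_right: "vector_space t \<Longrightarrow> t c (\<Sum>x\<leftarrow>xs. f x) = (\<Sum>x\<leftarrow>xs. t c (f x))"
  by (induction xs) (simp_all add: vs_scale_zero_right vector_space.vector_space_assms(1))
lemma scale_sum_left: "vector_space t \<Longrightarrow> t (\<Sum>x\<in>E. c x) v = (\<Sum>x\<in>E. t (c x) v)"
  by (induction E rule: infinite_finite_induct) (simp_all add: vs_scale_zero_left vector_space.vector_space_assms(2))
lemma scale_sum_right: "vector_space t \<Longrightarrow> t c (\<Sum>x\<in>E. f x) = (\<Sum>x\<in>E. t c (f x))"
  by (induction E rule: infinite_finite_induct) (simp_all add: vs_scale_zero_right vector_space.vector_space_assms(1))

lemma sum_list_sum_swap: "(\<Sum>x\<leftarrow>xs. \<Sum>e\<in>E. F x e) = (\<Sum>e\<in>E. \<Sum>x\<leftarrow>xs. F x e)"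
  by (induction xs) (simp_all add: sum.distrib)

lemma sum_list_swap: fixes F :: "_ \<Rightarrow> _ \<Rightarrow> 'c::comm_monoid_add" shows "(\<Sum>x\<leftarrow>xs. \<Sum>y\<leftarrow>ys. F x y) = (\<Sum>y\<leftarrow>ys. \<Sum>x\<leftarrow>xs. F x y)"
  by (induction xs) (simp_all add: sum_list_addf)

lemma sum_list_map_concat: "sum_list (map f (concat xss)) = (\<Sum>xs\<leftarrow>xss. sum_list (map f xs))"
  by (induction xss) simp_all

lemma expand_exists:
  assumes vs: "vector_space s" and fin: "finite A"
  shows "\<exists>E \<phi>. finite E \<and> (\<forall>e. lin s (*) (\<phi> e)) \<and> (\<forall>a\<in>A. a = (\<Sum>e\<in>E. s (\<phi> e a) e))"
proof -
  interpret vector_space s by (rule vs)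
  obtain B where B: "independent B" "UNIV \<subseteq> span B"
    using basis_exists[of UNIV] by blast
  define E where "E = (\<Union>a\<in>A. {b. representation B a b \<noteq> 0})"
  have finE: "finite E" unfolding E_def using fin finite_representation by (intro finite_UN_I) auto
  have linr: "lin s (*) (\<lambda>v. representation B v e)" for e
 proof -
    have "span B = UNIV" using B(2) by auto
    then show ?thesis using linear_representation[OF B(1)] by simp
  qed
  have "a = (\<Sum>e\<in>E. s (representation B a e) e)" if "a \<in> A" for a
  proof -
    have "(\<Sum>e\<in>E. s (representation B a e) e) = (\<Sum>b | representation B a b \<noteq> 0. s (representation B a b) b)"
      by (rule sum.mono_neutral_right[OF finE]) (use that in \<open>auto simp: E_def\<close>)
    also have "\<dots> = a" using sum_nonzero_representation_eq[OF B(1)] B(2) by blast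
    finally show ?thesis by simp
  qed
  then show ?thesis
    by (intro exI[of _ E] exI[of _ "\<lambda>e v. representation B v e"] conjI finE allI linr) auto
qed

lemma lin_expand:
  assumes "lin s t f" "finite E"
  shows "f (\<Sum>e\<in>E. s (c e) e) = (\<Sum>e\<in>E. t (c e) (f e))"
  using assms by (simp add: lin_sum lin_scale)

lemma teq2_transfer:
  assumes vsa: "vector_space sa" and vsb: "vector_space sb" and vsc: "vector_space sc"
    and teq: "teq2 sa sb xs ys" and bil: "bilinear_map sa sb sc g"
  shows "(\<Sum>(a, b)\<leftarrow>xs. g a b) = (\<Sum>(a, b)\<leftarrow>ys. g a b)"
proof -
  obtain E \<phi> where E: "finite E" "\<forall>e. lin sa (*) (\<phi> e)"
      "\<forall>a\<in>fst ` set (xs @ ys). a = (\<Sum>e\<in>E. sa (\<phi> e a) e)"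
    using expand_exists[OF vsa, of "fst ` set (xs @ ys)"] by blast
  obtain F \<psi> where F: "finite F" "\<forall>e. lin sb (*) (\<psi> e)"
      "\<forall>a\<in>snd ` set (xs @ ys). a = (\<Sum>e\<in>F. sb (\<psi> e a) e)"
    using expand_exists[OF vsb, of "snd ` set (xs @ ys)"] by blast
  have l1: "lin sa sc (\<lambda>a. g a b)" for b using bil by (simp add: bilinear_map_def)
  have l2: "lin sb sc (\<lambda>b. g a b)" for a using bil by (simp add: bilinear_map_def)
  have key: "g a b = (\<Sum>e\<in>E. \<Sum>f\<in>F. sc (\<phi> e a * \<psi> f b) (g e f))"
    if "a \<in> fst ` set (xs @ ys)" "b \<in> snd ` set (xs @ ys)" for a b
  proof -
    have "g a b = g (\<Sum>e\<in>E. sa (\<phi> e a) e) (\<Sum>f\<in>F. sb (\<psi> f b) f)"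
      using E(3) F(3) that by metis
    also have "\<dots> = (\<Sum>e\<in>E. sc (\<phi> e a) (g e (\<Sum>f\<in>F. sb (\<psi> f b) f)))"
      by (rule lin_expand[OF l1 E(1)])
    also have "\<dots> = (\<Sum>e\<in>E. sc (\<phi> e a) (\<Sum>f\<in>F. sc (\<psi> f b) (g e f)))"
      by (simp add: lin_expand[OF l2 F(1)])
    also have "\<dots> = (\<Sum>e\<in>E. \<Sum>f\<in>F. sc (\<phi> e a * \<psi> f b) (g e f))"
      by (simp add: scale_sum_right[OF vsc] vector_space.vector_space_assms(3)[OF vsc])
    finally show ?thesis .
  qed
  have gen: "(\<Sum>(a, b)\<leftarrow>zs. g a b) = (\<Sum>e\<in>E. \<Sum>f\<in>F. sc (\<Sum>(a, b)\<leftarrow>zs. \<phi> e a * \<psi> f b) (g e f))"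
    if "set zs \<subseteq> set (xs @ ys)" for zs
  proof -
    have "(\<Sum>(a, b)\<leftarrow>zs. g a b) = (\<Sum>z\<leftarrow>zs. g (fst z) (snd z))" by (simp add: case_prod_beta')
    also have "\<dots> = (\<Sum>z\<leftarrow>zs. \<Sum>e\<in>E. \<Sum>f\<in>F. sc (\<phi> e (fst z) * \<psi> f (snd z)) (g e f))"
      by (rule arg_cong[where f=sum_list], rule map_cong[OF refl], rule key) (use that in force)+
    also have "\<dots> = (\<Sum>e\<in>E. \<Sum>f\<in>F. \<Sum>z\<leftarrow>zs. sc (\<phi> e (fst z) * \<psi> f (snd z)) (g e f))"
      by (simp add: sum_list_sum_swap)
    also have "\<dots> = (\<Sum>e\<in>E. \<Sum>f\<in>F. sc (\<Sum>(a, b)\<leftarrow>zs. \<phi> e a * \<psi> f b) (g e f))"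
      by (simp add: scale_sum_list_left[OF vsc] case_prod_beta')
    finally show ?thesis .
  qed
  have eq: "(\<Sum>(a, b)\<leftarrow>xs. \<phi> e a * \<psi> f b) = (\<Sum>(a, b)\<leftarrow>ys. \<phi> e a * \<psi> f b)" for e f
    using teq E(2) F(2) by (simp add: teq2_def lin_functional_def)
  show ?thesis using gen[of xs] gen[of ys] eq by simp
qed


definition trilin :: "('k::field \<Rightarrow> 'a::ab_group_add \<Rightarrow> 'a) \<Rightarrow> ('k \<Rightarrow> 'c::ab_group_add \<Rightarrow> 'c)
    \<Rightarrow> ('a \<Rightarrow> 'a \<Rightarrow> 'a \<Rightarrow> 'c) \<Rightarrow> bool" where
  "trilin s t G \<longleftrightarrow> (\<forall>b c. lin s t (\<lambda>a. G a b c)) \<and> (\<forall>a c. lin s t (\<lambda>b. G a b c))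
      \<and> (\<forall>a b. lin s t (\<lambda>c. G a b c))"

lemma teq3_transfer:
  assumes vsa: "vector_space s" and vsc: "vector_space t"
    and teq: "teq3 s xs ys" and tri: "trilin s t G"
  shows "(\<Sum>(a, b, c)\<leftarrow>xs. G a b c) = (\<Sum>(a, b, c)\<leftarrow>ys. G a b c)"
proof -
  define A where "A = fst ` set (xs @ ys) \<union> fst ` snd ` set (xs @ ys) \<union> snd ` snd ` set (xs @ ys)"
  obtain E \<phi> where E: "finite E" "\<forall>e. lin s (*) (\<phi> e)"
      "\<forall>a\<in>A. a = (\<Sum>e\<in>E. s (\<phi> e a) e)"
    using expand_exists[OF vsa, of A] unfolding A_def by auto
  have l1: "lin s t (\<lambda>a. G a b c)" for b c using tri by (simp add: trilin_def)
  have l2: "lin s t (\<lambda>b. G a b c)" for a c using tri by (simp add: trilin_def)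
  have l3: "lin s t (\<lambda>c. G a b c)" for a b using tri by (simp add: trilin_def)
  have key: "G a b c = (\<Sum>e\<in>E. \<Sum>f\<in>E. \<Sum>g\<in>E. t (\<phi> e a * \<phi> f b * \<phi> g c) (G e f g))"
    if "a \<in> A" "b \<in> A" "c \<in> A" for a b c
  proof -
    have "G a b c = G (\<Sum>e\<in>E. s (\<phi> e a) e) (\<Sum>f\<in>E. s (\<phi> f b) f) (\<Sum>g\<in>E. s (\<phi> g c) g)"
      using E(3) that by metis
    also have "\<dots> = (\<Sum>e\<in>E. t (\<phi> e a) (G e (\<Sum>f\<in>E. s (\<phi> f b) f) (\<Sum>g\<in>E. s (\<phi> g c) g)))"
      by (rule lin_expand[OF l1 E(1)])
    also have "\<dots> = (\<Sum>e\<in>E. t (\<phi> e a) (\<Sum>f\<in>E. t (\<phi> f b) (\<Sum>g\<in>E. t (\<phi> g c) (G e f g))))"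
      by (simp only: lin_expand[OF l2 E(1)]) (simp only: lin_expand[OF l3 E(1)])
    also have "\<dots> = (\<Sum>e\<in>E. \<Sum>f\<in>E. \<Sum>g\<in>E. t (\<phi> e a * \<phi> f b * \<phi> g c) (G e f g))"
      by (simp add: scale_sum_right[OF vsc] vector_space.vector_space_assms(3)[OF vsc] mult.assoc)
    finally show ?thesis .
  qed
  have gen: "(\<Sum>(a, b, c)\<leftarrow>zs. G a b c) = (\<Sum>e\<in>E. \<Sum>f\<in>E. \<Sum>g\<in>E.
       t (\<Sum>(a, b, c)\<leftarrow>zs. \<phi> e a * \<phi> f b * \<phi> g c) (G e f g))"
    if "set zs \<subseteq> set (xs @ ys)" for zs
  proof -
    have "(\<Sum>(a, b, c)\<leftarrow>zs. G a b c) = (\<Sum>z\<leftarrow>zs. G (fst z) (fst (snd z)) (snd (snd z)))"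
      by (simp add: case_prod_beta')
    also have "\<dots> = (\<Sum>z\<leftarrow>zs. \<Sum>e\<in>E. \<Sum>f\<in>E. \<Sum>g\<in>E.
        t (\<phi> e (fst z) * \<phi> f (fst (snd z)) * \<phi> g (snd (snd z))) (G e f g))"
    proof (rule arg_cong[where f=sum_list], rule map_cong[OF refl], rule key)
      fix z assume z: "z \<in> set zs"
      then have z': "z \<in> set (xs @ ys)" using that by blast
      show "fst z \<in> A" unfolding A_def using z' by blast
      show "fst (snd z) \<in> A" unfolding A_def using z' by blast
      show "snd (snd z) \<in> A" unfolding A_def using z' by blast
    qed
    also have "\<dots> = (\<Sum>e\<in>E. \<Sum>f\<in>E. \<Sum>g\<in>E. \<Sum>z\<leftarrow>zs.
        t (\<phi> e (fst z) * \<phi> f (fst (snd z)) * \<phi> g (snd (snd z))) (G e f g))"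
      by (simp add: sum_list_sum_swap)
    also have "\<dots> = (\<Sum>e\<in>E. \<Sum>f\<in>E. \<Sum>g\<in>E.
       t (\<Sum>(a, b, c)\<leftarrow>zs. \<phi> e a * \<phi> f b * \<phi> g c) (G e f g))"
      by (simp add: scale_sum_list_left[OF vsc] case_prod_beta')
    finally show ?thesis .
  qed
  have eq: "(\<Sum>(a, b, c)\<leftarrow>xs. \<phi> e a * \<phi> f b * \<phi> g c) = (\<Sum>(a, b, c)\<leftarrow>ys. \<phi> e a * \<phi> f b * \<phi> g c)" for e f g
    using teq E(2) by (simp add: teq3_def lin_functional_def)
  show ?thesis using gen[of xs] gen[of ys] eq by simp
qed

context
  fixes H :: "('k::field, 'a::ab_group_add) hopf"
  assumes cc: "cc_hopf H"
begin

lemma cc_vs: "vector_space (hscale H)" using cc by (simp add: cc_hopf_def Let_def)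
lemma cc_mult_bil: "bilinear_map (hscale H) (hscale H) (hscale H) (hmult H)" using cc by (simp add: cc_hopf_def Let_def)
lemma cc_assoc: "hmult H (hmult H x y) z = hmult H x (hmult H y z)" using cc by (simp add: cc_hopf_def Let_def)
lemma cc_unit_l: "hmult H (hunit H) x = x" using cc by (simp add: cc_hopf_def Let_def)
lemma cc_unit_r: "hmult H x (hunit H) = x" using cc by (simp add: cc_hopf_def Let_def)
lemma cc_comult_add: "teq2 (hscale H) (hscale H) (hcomult H (x + y)) (hcomult H x @ hcomult H y)"
  using cc by (simp add: cc_hopf_def Let_def)
lemma cc_comult_scale: "teq2 (hscale H) (hscale H) (hcomult H (hscale H c x)) (map (\<lambda>(a, b). (hscale H c a, b)) (hcomult H x))"
  using cc by (simp add: cc_hopf_def Let_def)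
lemma cc_coassoc: "teq3 (hscale H) [(a, b1, b2). (a, b) \<leftarrow> hcomult H x, (b1, b2) \<leftarrow> hcomult H b]
                    [(a1, a2, b). (a, b) \<leftarrow> hcomult H x, (a1, a2) \<leftarrow> hcomult H a]"
  using cc by (simp add: cc_hopf_def Let_def)
lemma cc_counit_lin: "lin (hscale H) (*) (hcounit H)" using cc by (simp add: cc_hopf_def Let_def lin_functional_def)
lemma cc_counit_l: "(\<Sum>(a, b) \<leftarrow> hcomult H x. hscale H (hcounit H a) b) = x" using cc by (simp add: cc_hopf_def Let_def)
lemma cc_counit_r: "(\<Sum>(a, b) \<leftarrow> hcomult H x. hscale H (hcounit H b) a) = x" using cc by (simp add: cc_hopf_def Let_def)
lemma cc_comult_unit: "teq2 (hscale H) (hscale H) (hcomult H (hunit H)) [(hunit H, hunit H)]"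
  using cc by (simp add: cc_hopf_def Let_def)
lemma cc_counit_mult: "hcounit H (hmult H x y) = hcounit H x * hcounit H y" using cc by (simp add: cc_hopf_def Let_def)
lemma cc_counit_unit: "hcounit H (hunit H) = 1" using cc by (simp add: cc_hopf_def Let_def)
lemma cc_S_lin: "lin (hscale H) (hscale H) (hantipode H)" using cc by (simp add: cc_hopf_def Let_def)
lemma cc_antipode_r: "(\<Sum>(a, b) \<leftarrow> hcomult H x. hmult H a (hantipode H b)) = hscale H (hcounit H x) (hunit H)"
  using cc by (simp add: cc_hopf_def Let_def)
lemma cc_antipode_l: "(\<Sum>(a, b) \<leftarrow> hcomult H x. hmult H (hantipode H a) b) = hscale H (hcounit H x) (hunit H)"
  using cc by (simp add: cc_hopf_def Let_def)
lemma cc_cocomm: "teq2 (hscale H) (hscale H) (hcomult H x) (map (\<lambda>(a, b). (b, a)) (hcomult H x))"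
  using cc by (simp add: cc_hopf_def Let_def)

lemma cc_mult_lin_l: "lin (hscale H) (hscale H) (\<lambda>x. hmult H x y)"
  using cc_mult_bil by (simp add: bilinear_map_def)
lemma cc_mult_lin_r: "lin (hscale H) (hscale H) (\<lambda>y. hmult H x y)"
  using cc_mult_bil by (simp add: bilinear_map_def)

lemma SW_lin:
  assumes bil: "bilinear_map (hscale H) (hscale H) t g" and vst: "vector_space t"
  shows "lin (hscale H) t (\<lambda>x. \<Sum>(a, b) \<leftarrow> hcomult H x. g a b)"
  unfolding Vector_Spaces.linear_iff
proof (intro conjI allI cc_vs vst)
  fix x y
  show "(\<Sum>(a, b) \<leftarrow> hcomult H (x + y). g a b) = (\<Sum>(a, b) \<leftarrow> hcomult H x. g a b) + (\<Sum>(a, b) \<leftarrow> hcomult H y. g a b)"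
    using teq2_transfer[OF cc_vs cc_vs vst cc_comult_add bil, of x y] by simp
next
  fix c x
  have l1: "lin (hscale H) t (\<lambda>a. g a b)" for b using bil by (simp add: bilinear_map_def)
  have "(\<Sum>(a, b) \<leftarrow> hcomult H (hscale H c x). g a b) = (\<Sum>(a, b) \<leftarrow> map (\<lambda>(a, b). (hscale H c a, b)) (hcomult H x). g a b)"
    using teq2_transfer[OF cc_vs cc_vs vst cc_comult_scale bil, of c x] by simp
  also have "\<dots> = (\<Sum>(a, b) \<leftarrow> hcomult H x. t c (g a b))"
    by (simp add: case_prod_beta' o_def lin_scale[OF l1])
  also have "\<dots> = t c (\<Sum>(a, b) \<leftarrow> hcomult H x. g a b)"
    by (simp add: scale_sum_list_right[OF vst] case_prod_beta')
  finally show "(\<Sum>(a, b) \<leftarrow> hcomult H (hscale H c x). g a b) = t c (\<Sum>(a, b) \<leftarrow> hcomult H x. g a b)" .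
qed

lemma SW_coassoc:
  assumes tri: "trilin (hscale H) t G" and vst: "vector_space t"
  shows "(\<Sum>(a, b) \<leftarrow> hcomult H x. \<Sum>(c, d) \<leftarrow> hcomult H b. G a c d)
       = (\<Sum>(a, b) \<leftarrow> hcomult H x. \<Sum>(c, d) \<leftarrow> hcomult H a. G c d b)"
  using teq3_transfer[OF cc_vs vst cc_coassoc tri, of x]
  by (simp add: sum_list_map_concat case_prod_beta' o_def)

lemma SW_cocomm:
  assumes bil: "bilinear_map (hscale H) (hscale H) t g" and vst: "vector_space t"
  shows "(\<Sum>(a, b) \<leftarrow> hcomult H x. g a b) = (\<Sum>(a, b) \<leftarrow> hcomult H x. g b a)"
  using teq2_transfer[OF cc_vs cc_vs vst cc_cocomm bil, of x]
  by (simp add: case_prod_beta' o_def)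

lemma SW_counit_l:
  assumes "lin (hscale H) t F"
  shows "(\<Sum>(a, b) \<leftarrow> hcomult H x. t (hcounit H a) (F b)) = F x"
proof -
  have "F x = F (\<Sum>(a, b) \<leftarrow> hcomult H x. hscale H (hcounit H a) b)" by (simp add: cc_counit_l)
  also have "\<dots> = (\<Sum>(a, b) \<leftarrow> hcomult H x. F (hscale H (hcounit H a) b))"
    by (simp add: lin_sum_list[OF assms] case_prod_beta')
  finally show ?thesis by (simp add: lin_scale[OF assms] case_prod_beta')
qed

lemma SW_counit_r:
  assumes "lin (hscale H) t F"
  shows "(\<Sum>(a, b) \<leftarrow> hcomult H x. t (hcounit H b) (F a)) = F x"
proof -
  have "F x = F (\<Sum>(a, b) \<leftarrow> hcomult H x. hscale H (hcounit H b) a)" by (simp add: cc_counit_r)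
  also have "\<dots> = (\<Sum>(a, b) \<leftarrow> hcomult H x. F (hscale H (hcounit H b) a))"
    by (simp add: lin_sum_list[OF assms] case_prod_beta')
  finally show ?thesis by (simp add: lin_scale[OF assms] case_prod_beta')
qed

lemma SW_antipode_r:
  assumes "lin (hscale H) t F"
  shows "(\<Sum>(a, b) \<leftarrow> hcomult H x. F (hmult H a (hantipode H b))) = t (hcounit H x) (F (hunit H))"
proof -
  have "(\<Sum>(a, b) \<leftarrow> hcomult H x. F (hmult H a (hantipode H b))) = F (\<Sum>(a, b) \<leftarrow> hcomult H x. hmult H a (hantipode H b))"
    by (simp add: lin_sum_list[OF assms] case_prod_beta')
  then show ?thesis by (simp add: cc_antipode_r lin_scale[OF assms])
qed

lemma SW_antipode_l:
  assumes "lin (hscale H) t F"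
  shows "(\<Sum>(a, b) \<leftarrow> hcomult H x. F (hmult H (hantipode H a) b)) = t (hcounit H x) (F (hunit H))"
proof -
  have "(\<Sum>(a, b) \<leftarrow> hcomult H x. F (hmult H (hantipode H a) b)) = F (\<Sum>(a, b) \<leftarrow> hcomult H x. hmult H (hantipode H a) b)"
    by (simp add: lin_sum_list[OF assms] case_prod_beta')
  then show ?thesis by (simp add: cc_antipode_l lin_scale[OF assms])
qed

lemma SW_unit:
  assumes bil: "bilinear_map (hscale H) (hscale H) t g" and vst: "vector_space t"
  shows "(\<Sum>(a, b) \<leftarrow> hcomult H (hunit H). g a b) = g (hunit H) (hunit H)"
  using teq2_transfer[OF cc_vs cc_vs vst cc_comult_unit bil] by simp

lemma S_unit: "hantipode H (hunit H) = hunit H"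
proof -
  have bil: "bilinear_map (hscale H) (hscale H) (hscale H) (\<lambda>a b. hmult H a (hantipode H b))"
    unfolding bilinear_map_def
    by (intro conjI allI cc_mult_lin_l Vector_Spaces.linear_compose[OF cc_S_lin cc_mult_lin_r, unfolded o_def])
  have "(\<Sum>(a, b) \<leftarrow> hcomult H (hunit H). hmult H a (hantipode H b)) = hmult H (hunit H) (hantipode H (hunit H))"
    by (rule SW_unit[OF bil cc_vs])
  then show ?thesis
    by (simp add: cc_antipode_r cc_unit_l cc_counit_unit vector_space.vector_space_assms(4)[OF cc_vs])
qed

end


section \<open>Morphisms, modules, coalgebra maps\<close>

lemma hm_lin: "hopf_morphism X Y f \<Longrightarrow> lin (hscale X) (hscale Y) f" by (simp add: hopf_morphism_def)
lemma hm_mult: "hopf_morphism X Y f \<Longrightarrow> f (hmult X x y) = hmult Y (f x) (f y)" by (simp add: hopf_morphism_def)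
lemma hm_unit: "hopf_morphism X Y f \<Longrightarrow> f (hunit X) = hunit Y" by (simp add: hopf_morphism_def)
lemma hm_comult: "hopf_morphism X Y f \<Longrightarrow> teq2 (hscale Y) (hscale Y) (hcomult Y (f x)) (map (\<lambda>(a, b). (f a, f b)) (hcomult X x))"
  by (simp add: hopf_morphism_def)
lemma hm_counit: "hopf_morphism X Y f \<Longrightarrow> hcounit Y (f x) = hcounit X x" by (simp add: hopf_morphism_def)

lemma SW_hom:
  assumes f: "hopf_morphism X Y f" and ccY: "cc_hopf Y"
    and bil: "bilinear_map (hscale Y) (hscale Y) t g" and vst: "vector_space t"
  shows "(\<Sum>(a, b) \<leftarrow> hcomult Y (f x). g a b) = (\<Sum>(a, b) \<leftarrow> hcomult X x. g (f a) (f b))"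
  using teq2_transfer[OF cc_vs[OF ccY] cc_vs[OF ccY] vst hm_comult[OF f] bil, of x]
  by (simp add: case_prod_beta' o_def)

lemma md_bil: "module_hopf B X act \<Longrightarrow> bilinear_map (hscale B) (hscale X) (hscale X) act" by (simp add: module_hopf_def)
lemma md_lin_l: "module_hopf B X act \<Longrightarrow> lin (hscale B) (hscale X) (\<lambda>b. act b x)" by (simp add: module_hopf_def bilinear_map_def)
lemma md_lin_r: "module_hopf B X act \<Longrightarrow> lin (hscale X) (hscale X) (\<lambda>x. act b x)" by (simp add: module_hopf_def bilinear_map_def)
lemma md_mult: "module_hopf B X act \<Longrightarrow> act (hmult B b b') x = act b (act b' x)" by (simp add: module_hopf_def)
lemma md_unit: "module_hopf B X act \<Longrightarrow> act (hunit B) x = x" by (simp add: module_hopf_def)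
lemma md_prod: "module_hopf B X act \<Longrightarrow> act b (hmult X x y) = (\<Sum>(b1, b2) \<leftarrow> hcomult B b. hmult X (act b1 x) (act b2 y))"
  by (simp add: module_hopf_def)
lemma md_unitX: "module_hopf B X act \<Longrightarrow> act b (hunit X) = hscale X (hcounit B b) (hunit X)" by (simp add: module_hopf_def)
lemma md_comult: "module_hopf B X act \<Longrightarrow> teq2 (hscale X) (hscale X) (hcomult X (act b x))
                [(act b1 x1, act b2 x2). (b1, b2) \<leftarrow> hcomult B b, (x1, x2) \<leftarrow> hcomult X x]"
  by (simp add: module_hopf_def)
lemma md_counit: "module_hopf B X act \<Longrightarrow> hcounit X (act b x) = hcounit B b * hcounit X x" by (simp add: module_hopf_def)

lemma cm_md: "hopf_crossed_module B X act d \<Longrightarrow> module_hopf B X act" by (simp add: hopf_crossed_module_def)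
lemma cm_hm: "hopf_crossed_module B X act d \<Longrightarrow> hopf_morphism X B d" by (simp add: hopf_crossed_module_def)
lemma cm_d_act: "hopf_crossed_module B X act d \<Longrightarrow>
    d (act b x) = (\<Sum>(b1, b2) \<leftarrow> hcomult B b. hmult B (hmult B b1 (d x)) (hantipode B b2))"
  by (simp add: hopf_crossed_module_def)
lemma cm_act_d: "hopf_crossed_module B X act d \<Longrightarrow>
    act (d y) x = (\<Sum>(y1, y2) \<leftarrow> hcomult X y. hmult X (hmult X y1 x) (hantipode X y2))"
  by (simp add: hopf_crossed_module_def)

lemma co_bil: "coalg_map2 M N L h \<Longrightarrow> bilinear_map (hscale M) (hscale N) (hscale L) h" by (simp add: coalg_map2_def)
lemma co_lin_l: "coalg_map2 M N L h \<Longrightarrow> lin (hscale M) (hscale L) (\<lambda>m. h m n)" by (simp add: coalg_map2_def bilinear_map_def)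
lemma co_lin_r: "coalg_map2 M N L h \<Longrightarrow> lin (hscale N) (hscale L) (\<lambda>n. h m n)" by (simp add: coalg_map2_def bilinear_map_def)

lemma SW_h:
  assumes co: "coalg_map2 M N L h" and ccL: "cc_hopf L"
    and bil: "bilinear_map (hscale L) (hscale L) t g" and vst: "vector_space t"
  shows "(\<Sum>(a, b) \<leftarrow> hcomult L (h m n). g a b)
      = (\<Sum>(m1, m2) \<leftarrow> hcomult M m. \<Sum>(n1, n2) \<leftarrow> hcomult N n. g (h m1 n1) (h m2 n2))"
proof -
  have "teq2 (hscale L) (hscale L) (hcomult L (h m n))
                [(h m1 n1, h m2 n2). (m1, m2) \<leftarrow> hcomult M m, (n1, n2) \<leftarrow> hcomult N n]"
    using co by (simp add: coalg_map2_def)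
  from teq2_transfer[OF cc_vs[OF ccL] cc_vs[OF ccL] vst this bil] show ?thesis
    by (simp add: sum_list_map_concat case_prod_beta' o_def)
qed

lemma bilinI: "(\<And>b. lin sa sc (\<lambda>a. g a b)) \<Longrightarrow> (\<And>a. lin sb sc (\<lambda>b. g a b)) \<Longrightarrow> bilinear_map sa sb sc g"
  by (simp add: bilinear_map_def)
lemma trilinI: "(\<And>b c. lin s t (\<lambda>a. G a b c)) \<Longrightarrow> (\<And>a c. lin s t (\<lambda>b. G a b c)) \<Longrightarrow> (\<And>a b. lin s t (\<lambda>c. G a b c))
   \<Longrightarrow> trilin s t G"
  by (simp add: trilin_def)

lemma linP_id: "vector_space s \<Longrightarrow> lin s s (\<lambda>x. x)"
  by (simp add: Vector_Spaces.linear_iff)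

lemma linP_comp: "lin t u f \<Longrightarrow> lin s t F \<Longrightarrow> lin s u (\<lambda>x. f (F x))"
  using Vector_Spaces.linear_compose[of s t F u f] by (simp add: o_def)

lemma linP_multl: "cc_hopf H \<Longrightarrow> lin s (hscale H) F \<Longrightarrow> lin s (hscale H) (\<lambda>x. hmult H (F x) c)"
  by (rule linP_comp[OF cc_mult_lin_l])
lemma linP_multr: "cc_hopf H \<Longrightarrow> lin s (hscale H) F \<Longrightarrow> lin s (hscale H) (\<lambda>x. hmult H c (F x))"
  by (rule linP_comp[OF cc_mult_lin_r])
lemma linP_S: "cc_hopf H \<Longrightarrow> lin s (hscale H) F \<Longrightarrow> lin s (hscale H) (\<lambda>x. hantipode H (F x))"
  by (rule linP_comp[OF cc_S_lin])
lemma linP_hom: "hopf_morphism X Y f \<Longrightarrow> lin s (hscale X) F \<Longrightarrow> lin s (hscale Y) (\<lambda>x. f (F x))"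
  by (rule linP_comp[OF hm_lin])
lemma linP_actl: "module_hopf B X act \<Longrightarrow> lin s (hscale B) F \<Longrightarrow> lin s (hscale X) (\<lambda>x. act (F x) c)"
  by (rule linP_comp[OF md_lin_l])
lemma linP_actr: "module_hopf B X act \<Longrightarrow> lin s (hscale X) F \<Longrightarrow> lin s (hscale X) (\<lambda>x. act c (F x))"
  by (rule linP_comp[OF md_lin_r])
lemma linP_hl: "coalg_map2 M N L h \<Longrightarrow> lin s (hscale M) F \<Longrightarrow> lin s (hscale L) (\<lambda>x. h (F x) c)"
  by (rule linP_comp[OF co_lin_l])
lemma linP_hr: "coalg_map2 M N L h \<Longrightarrow> lin s (hscale N) F \<Longrightarrow> lin s (hscale L) (\<lambda>x. h c (F x))"
  by (rule linP_comp[OF co_lin_r])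

lemma linP_sum: "vector_space s \<Longrightarrow> vector_space t \<Longrightarrow> (\<And>a b. lin s t (\<lambda>x. G a b x))
   \<Longrightarrow> lin s t (\<lambda>x. \<Sum>(a, b) \<leftarrow> xs. G a b x)"
proof (induction xs)
  case Nil then show ?case by (simp add: Vector_Spaces.linear_iff vs_scale_zero_right)
next
  case (Cons p xs)
  then have l1: "lin s t (\<lambda>x. case p of (a, b) \<Rightarrow> G a b x)" by (cases p) simp
  have l2: "lin s t (\<lambda>x. \<Sum>(a, b) \<leftarrow> xs. G a b x)" using Cons by simp
  show ?case using l1 l2 Cons.prems(2)
    by (simp add: Vector_Spaces.linear_iff vector_space.vector_space_assms(1) algebra_simps)
qed

lemma linP_SW: "cc_hopf H \<Longrightarrow> bilinear_map (hscale H) (hscale H) t g \<Longrightarrow> vector_space t \<Longrightarrow>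
   lin s (hscale H) F \<Longrightarrow> lin s t (\<lambda>x. \<Sum>(a, b) \<leftarrow> hcomult H (F x). g a b)"
  by (rule linP_comp[OF SW_lin])

lemma linP_scale: "lin s t F \<Longrightarrow> lin s t (\<lambda>x. t c (F x))"
  by (simp add: Vector_Spaces.linear_iff vector_space.vector_space_assms(1))
    (metis mult.commute vector_space.vector_space_assms(3))


lemma vs_field: "vector_space ((*) :: 'k::field \<Rightarrow> 'k \<Rightarrow> 'k)"
  by unfold_locales (simp_all add: algebra_simps)

lemma linP_fmultl: "lin s (*) F \<Longrightarrow> lin s (*) (\<lambda>x. F x * (c::'k::field))"
  by (simp add: Vector_Spaces.linear_iff vs_field algebra_simps)
lemma linP_fmultr: "lin s (*) F \<Longrightarrow> lin s (*) (\<lambda>x. (c::'k::field) * F x)"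
  by (simp add: Vector_Spaces.linear_iff vs_field algebra_simps)

lemma module_pullback:
  assumes md: "module_hopf P L act" and hm: "hopf_morphism M P mu"
    and ccM: "cc_hopf M" and ccP: "cc_hopf P" and ccL: "cc_hopf L"
  shows "module_hopf M L (\<lambda>m l. act (mu m) l)"
proof -
  note vs = cc_vs[OF ccM] cc_vs[OF ccP] cc_vs[OF ccL] vs_field
  note R = linP_id linP_actl[OF md] linP_actr[OF md] linP_hom[OF hm] linP_multl[OF ccL] linP_multr[OF ccL]
  have bil: "bilinear_map (hscale M) (hscale L) (hscale L) (\<lambda>m l. act (mu m) l)"
    by (intro bilinI R vs)
  have prod: "act (mu m) (hmult L x y) = (\<Sum>(b1, b2) \<leftarrow> hcomult M m. hmult L (act (mu b1) x) (act (mu b2) y))" for m x y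
  proof -
    have "act (mu m) (hmult L x y) = (\<Sum>(b1, b2) \<leftarrow> hcomult P (mu m). hmult L (act b1 x) (act b2 y))"
      by (rule md_prod[OF md])
    also have "\<dots> = (\<Sum>(b1, b2) \<leftarrow> hcomult M m. hmult L (act (mu b1) x) (act (mu b2) y))"
      by (rule SW_hom[OF hm ccP _ vs(3)]) (intro bilinI R vs)
    finally show ?thesis .
  qed
  have comult: "teq2 (hscale L) (hscale L) (hcomult L (act (mu m) x))
                [(act (mu b1) x1, act (mu b2) x2). (b1, b2) \<leftarrow> hcomult M m, (x1, x2) \<leftarrow> hcomult L x]" for m x
    unfolding teq2_def
  proof (intro allI impI)
    fix \<phi> \<psi>
    assume fnc: "lin_functional (hscale L) \<phi> \<and> lin_functional (hscale L) \<psi>"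
    then have lf: "lin (hscale L) (*) \<phi>" "lin (hscale L) (*) \<psi>" by (simp_all add: lin_functional_def)
    have "(\<Sum>(a, b) \<leftarrow> hcomult L (act (mu m) x). \<phi> a * \<psi> b)
       = (\<Sum>(a, b) \<leftarrow> [(act b1 x1, act b2 x2). (b1, b2) \<leftarrow> hcomult P (mu m), (x1, x2) \<leftarrow> hcomult L x]. \<phi> a * \<psi> b)"
      using md_comult[OF md, of "mu m" x] fnc unfolding teq2_def by blast
    also have "\<dots> = (\<Sum>(b1, b2) \<leftarrow> hcomult P (mu m). \<Sum>(x1, x2) \<leftarrow> hcomult L x. \<phi> (act b1 x1) * \<psi> (act b2 x2))"
      by (simp add: sum_list_map_concat case_prod_beta' o_def)
    also have "\<dots> = (\<Sum>(b1, b2) \<leftarrow> hcomult M m. \<Sum>(x1, x2) \<leftarrow> hcomult L x. \<phi> (act (mu b1) x1) * \<psi> (act (mu b2) x2))"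
      by (rule SW_hom[OF hm ccP _ vs(4)])
         (intro bilinI R vs linP_sum linP_fmultl linP_fmultr linP_comp[OF lf(1)] linP_comp[OF lf(2)])
    also have "\<dots> = (\<Sum>(a, b) \<leftarrow> [(act (mu b1) x1, act (mu b2) x2). (b1, b2) \<leftarrow> hcomult M m, (x1, x2) \<leftarrow> hcomult L x]. \<phi> a * \<psi> b)"
      by (simp add: sum_list_map_concat case_prod_beta' o_def)
    finally show "(\<Sum>(a, b) \<leftarrow> hcomult L (act (mu m) x). \<phi> a * \<psi> b)
       = (\<Sum>(a, b) \<leftarrow> [(act (mu b1) x1, act (mu b2) x2). (b1, b2) \<leftarrow> hcomult M m, (x1, x2) \<leftarrow> hcomult L x]. \<phi> a * \<psi> b)" .
  qed
  show ?thesis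
    unfolding module_hopf_def
    using bil prod comult
    by (simp add: hm_mult[OF hm] md_mult[OF md] hm_unit[OF hm] md_unit[OF md] md_unitX[OF md]
        hm_counit[OF hm] md_counit[OF md])
qed


lemma twoA1:
  assumes cm: "hopf_crossed_module P M actM mu" and md: "module_hopf P L actL"
    and ccM: "cc_hopf M" and ccP: "cc_hopf P" and ccL: "cc_hopf L"
  shows "(\<Sum>(p1, p2) \<leftarrow> hcomult P p. actL (mu (actM p1 m)) (actL p2 l)) = actL p (actL (mu m) l)"
proof -
  note vs = cc_vs[OF ccM] cc_vs[OF ccP] cc_vs[OF ccL] vs_field
  note R = linP_id linP_actl[OF md] linP_actr[OF md] linP_multl[OF ccP] linP_multr[OF ccP]
    linP_S[OF ccP] linP_sum
  let ?S = "hantipode P" and ?m = "hmult P"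
  have step1: "actL (mu (actM q m)) y = (\<Sum>(c, d) \<leftarrow> hcomult P q. actL (?m (?m c (mu m)) (?S d)) y)" for q y
    by (simp add: cm_d_act[OF cm] lin_sum_list[OF md_lin_l[OF md]] case_prod_beta')
  have "(\<Sum>(p1, p2) \<leftarrow> hcomult P p. actL (mu (actM p1 m)) (actL p2 l))
     = (\<Sum>(p1, p2) \<leftarrow> hcomult P p. \<Sum>(c, d) \<leftarrow> hcomult P p1. actL (?m (?m c (mu m)) (?S d)) (actL p2 l))"
    by (simp add: step1)
  also have "\<dots> = (\<Sum>(a, b) \<leftarrow> hcomult P p. \<Sum>(c, d) \<leftarrow> hcomult P b. actL (?m (?m a (mu m)) (?S c)) (actL d l))"
    by (rule SW_coassoc[OF ccP _ vs(3), symmetric]) (intro trilinI R vs)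
  also have "\<dots> = (\<Sum>(a, b) \<leftarrow> hcomult P p. \<Sum>(c, d) \<leftarrow> hcomult P b. actL (?m a (mu m)) (actL (?m (?S c) d) l))"
    by (simp add: md_mult[OF md])
  also have "\<dots> = (\<Sum>(a, b) \<leftarrow> hcomult P p. hscale L (hcounit P b) (actL (?m a (mu m)) (actL (hunit P) l)))"
    by (subst SW_antipode_l[OF ccP, where t="hscale L"]) (intro R vs, rule refl)
  also have "\<dots> = actL (?m p (mu m)) l"
    by (simp add: md_unit[OF md]) (rule SW_counit_r[OF ccP], intro R vs)
  finally show ?thesis by (simp add: md_mult[OF md])
qed


lemma sum_list_swap2:
  fixes F :: "_ \<Rightarrow> _ \<Rightarrow> _ \<Rightarrow> _ \<Rightarrow> 'c::comm_monoid_add"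
  shows "(\<Sum>(a, b) \<leftarrow> xs. \<Sum>(c, d) \<leftarrow> ys. F a b c d) = (\<Sum>(c, d) \<leftarrow> ys. \<Sum>(a, b) \<leftarrow> xs. F a b c d)"
  using sum_list_swap[of "\<lambda>x y. F (fst x) (snd x) (fst y) (snd y)" ys xs]
  by (simp add: case_prod_beta')

lemma SW_swap23:
  assumes cc: "cc_hopf H" and tri: "trilin (hscale H) t G" and vst: "vector_space t"
  shows "(\<Sum>(x1, x2) \<leftarrow> hcomult H x. \<Sum>(a, b) \<leftarrow> hcomult H x1. G a b x2)
       = (\<Sum>(x1, x2) \<leftarrow> hcomult H x. \<Sum>(a, b) \<leftarrow> hcomult H x1. G a x2 b)"
proof -
  have tri': "trilin (hscale H) t (\<lambda>a b c. G a c b)" using tri by (simp add: trilin_def)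
  have bil: "bilinear_map (hscale H) (hscale H) t (\<lambda>b c. G a b c)" for a
    using tri by (simp add: trilin_def bilinear_map_def)
  have "(\<Sum>(x1, x2) \<leftarrow> hcomult H x. \<Sum>(a, b) \<leftarrow> hcomult H x1. G a b x2)
      = (\<Sum>(a, z) \<leftarrow> hcomult H x. \<Sum>(b, x2) \<leftarrow> hcomult H z. G a b x2)"
    by (rule SW_coassoc[OF cc tri vst, symmetric])
  also have "\<dots> = (\<Sum>(a, z) \<leftarrow> hcomult H x. \<Sum>(b, x2) \<leftarrow> hcomult H z. G a x2 b)"
    by (simp only: SW_cocomm[OF cc bil vst])
  also have "\<dots> = (\<Sum>(x1, x2) \<leftarrow> hcomult H x. \<Sum>(a, b) \<leftarrow> hcomult H x1. G a x2 b)"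
    by (rule SW_coassoc[OF cc tri' vst])
  finally show ?thesis .
qed

context
  fixes L :: "('k::field, 'l::ab_group_add) hopf" and M :: "('k, 'm::ab_group_add) hopf"
    and N :: "('k, 'n::ab_group_add) hopf" and P :: "('k, 'p::ab_group_add) hopf"
    and actL :: "'p \<Rightarrow> 'l \<Rightarrow> 'l" and actM :: "'p \<Rightarrow> 'm \<Rightarrow> 'm" and actN :: "'p \<Rightarrow> 'n \<Rightarrow> 'n"
    and h :: "'m \<Rightarrow> 'n \<Rightarrow> 'l" and lam :: "'l \<Rightarrow> 'm" and lam' :: "'l \<Rightarrow> 'n"
    and mu :: "'m \<Rightarrow> 'p" and nu :: "'n \<Rightarrow> 'p"
  assumes XS: "hopf_crossed_square L M N P actL actM actN h lam lam' mu nu"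
begin

lemma XS_facts:
  "cc_hopf L" "cc_hopf M" "cc_hopf N" "cc_hopf P"
  "hopf_morphism L M lam" "hopf_morphism L N lam'" "hopf_morphism M P mu" "hopf_morphism N P nu"
  "module_hopf P L actL" "module_hopf P M actM" "module_hopf P N actN"
  "coalg_map2 M N L h"
  "hopf_crossed_module P M actM mu" "hopf_crossed_module P N actN nu"
  "hopf_crossed_module P L actL (mu \<circ> lam)"
  using XS by (simp_all add: hopf_crossed_square_def)

lemmas ccL = XS_facts(1) and ccM = XS_facts(2) and ccN = XS_facts(3) and ccP = XS_facts(4)
  and hm_lam = XS_facts(5) and hm_lam' = XS_facts(6) and hm_mu = XS_facts(7) and hm_nu = XS_facts(8)
  and mdL = XS_facts(9) and mdM = XS_facts(10) and mdN = XS_facts(11) and hco = XS_facts(12)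
  and cmM = XS_facts(13) and cmN = XS_facts(14) and cmL = XS_facts(15)

lemma CS3: "(\<Sum>(p1, p2) \<leftarrow> hcomult P p. h (actM p1 m) (actN p2 n)) = actL p (h m n)"
  using XS by (simp add: hopf_crossed_square_def)
lemma CS4a: "lam (h m n) = (\<Sum>(m1, m2) \<leftarrow> hcomult M m. hmult M m1 (actM (nu n) (hantipode M m2)))"
  using XS by (simp add: hopf_crossed_square_def)
lemma CS5a: "h (lam l) n = (\<Sum>(l1, l2) \<leftarrow> hcomult L l. hmult L l1 (actL (nu n) (hantipode L l2)))"
  using XS by (simp add: hopf_crossed_square_def)
lemma CS5b: "h m (lam' l) = (\<Sum>(l1, l2) \<leftarrow> hcomult L l. hmult L (actL (mu m) l1) (hantipode L l2))"
  using XS by (simp add: hopf_crossed_square_def)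
lemma CS6a: "h m (hmult N n n') =
          (\<Sum>(m1, m2) \<leftarrow> hcomult M m. \<Sum>(n1, n2) \<leftarrow> hcomult N n.
              hmult L (h m1 n1) (actL (nu n2) (h m2 n')))"
  using XS by (simp add: hopf_crossed_square_def)
lemma CS6b: "h (hmult M m m') n =
          (\<Sum>(m1, m2) \<leftarrow> hcomult M m. \<Sum>(n1, n2) \<leftarrow> hcomult N n.
              hmult L (actL (mu m1) (h m' n1)) (h m2 n2))"
  using XS by (simp add: hopf_crossed_square_def)

lemmas vsX = cc_vs[OF ccL] cc_vs[OF ccM] cc_vs[OF ccN] cc_vs[OF ccP] vs_field

lemmas RX = linP_id linP_sum
  linP_actl[OF mdL] linP_actr[OF mdL] linP_actl[OF mdM] linP_actr[OF mdM] linP_actl[OF mdN] linP_actr[OF mdN]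
  linP_hom[OF hm_mu] linP_hom[OF hm_nu] linP_hom[OF hm_lam] linP_hom[OF hm_lam']
  linP_multl[OF ccL] linP_multr[OF ccL] linP_multl[OF ccM] linP_multr[OF ccM]
  linP_multl[OF ccN] linP_multr[OF ccN] linP_multl[OF ccP] linP_multr[OF ccP]
  linP_S[OF ccL] linP_S[OF ccM] linP_S[OF ccN] linP_S[OF ccP]
  linP_hl[OF hco] linP_hr[OF hco]

lemma h_unit_l: "h (hunit M) n = hscale L (hcounit N n) (hunit L)"
proof -
  have "h (hunit M) n = h (lam (hunit L)) n" by (simp add: hm_unit[OF hm_lam])
  also have "\<dots> = hmult L (hunit L) (actL (nu n) (hantipode L (hunit L)))"
    by (simp only: CS5a) (rule SW_unit[OF ccL _ vsX(1)], intro bilinI RX vsX)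
  also have "\<dots> = hscale L (hcounit N n) (hunit L)"
    by (simp add: S_unit[OF ccL] cc_unit_l[OF ccL] md_unitX[OF mdL] hm_counit[OF hm_nu])
  finally show ?thesis .
qed

lemma h_unit_r: "h m (hunit N) = hscale L (hcounit M m) (hunit L)"
proof -
  have "h m (hunit N) = h m (lam' (hunit L))" by (simp add: hm_unit[OF hm_lam'])
  also have "\<dots> = hmult L (actL (mu m) (hunit L)) (hantipode L (hunit L))"
    by (simp only: CS5b) (rule SW_unit[OF ccL _ vsX(1)], intro bilinI RX vsX)
  also have "\<dots> = hscale L (hcounit M m) (hunit L)"
    by (simp add: S_unit[OF ccL] cc_unit_r[OF ccL] md_unitX[OF mdL] hm_counit[OF hm_mu])
  finally show ?thesis .
qed

lemma lemmaA: "hmult L y x = (\<Sum>(y1, y2) \<leftarrow> hcomult L y. hmult L (actL (mu (lam y1)) x) y2)"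
proof -
  let ?m = "hmult L" and ?S = "hantipode L"
  have cmLd: "actL (mu (lam z)) x = (\<Sum>(a, b) \<leftarrow> hcomult L z. ?m (?m a x) (?S b))" for z
    using cm_act_d[OF cmL, of z x] by simp
  have "(\<Sum>(y1, y2) \<leftarrow> hcomult L y. ?m (actL (mu (lam y1)) x) y2)
      = (\<Sum>(y1, y2) \<leftarrow> hcomult L y. \<Sum>(a, b) \<leftarrow> hcomult L y1. ?m (?m (?m a x) (?S b)) y2)"
    by (simp add: cmLd lin_sum_list[OF cc_mult_lin_l[OF ccL]] case_prod_beta')
  also have "\<dots> = (\<Sum>(a, z) \<leftarrow> hcomult L y. \<Sum>(b, y2) \<leftarrow> hcomult L z. ?m (?m (?m a x) (?S b)) y2)"
    by (rule SW_coassoc[OF ccL _ vsX(1), symmetric]) (intro trilinI RX vsX)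
  also have "\<dots> = (\<Sum>(a, z) \<leftarrow> hcomult L y. \<Sum>(b, y2) \<leftarrow> hcomult L z. ?m (?m a x) (?m (?S b) y2))"
    by (simp add: cc_assoc[OF ccL])
  also have "\<dots> = (\<Sum>(a, z) \<leftarrow> hcomult L y. hscale L (hcounit L z) (?m (?m a x) (hunit L)))"
    by (subst SW_antipode_l[OF ccL, where t="hscale L"]) (intro RX vsX, rule refl)
  also have "\<dots> = ?m y x"
    by (simp add: cc_unit_r[OF ccL]) (rule SW_counit_r[OF ccL], intro RX vsX)
  finally show ?thesis by simp
qed


lemma dh_act: "actL (mu (lam (h m n))) Y = (\<Sum>(m1, m2) \<leftarrow> hcomult M m. \<Sum>(n1, n2) \<leftarrow> hcomult N n.
    actL (mu m1) (actL (nu n1) (actL (mu (hantipode M m2)) (actL (hantipode P (nu n2)) Y))))"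
proof -
  have e1: "mu (actM (nu n) z) = (\<Sum>(n1, n2) \<leftarrow> hcomult N n. hmult P (hmult P (nu n1) (mu z)) (hantipode P (nu n2)))" for z
  proof -
    have "mu (actM (nu n) z) = (\<Sum>(b1, b2) \<leftarrow> hcomult P (nu n). hmult P (hmult P b1 (mu z)) (hantipode P b2))"
      by (rule cm_d_act[OF cmM])
    also have "\<dots> = (\<Sum>(n1, n2) \<leftarrow> hcomult N n. hmult P (hmult P (nu n1) (mu z)) (hantipode P (nu n2)))"
      by (rule SW_hom[OF hm_nu ccP _ vsX(4)]) (intro bilinI RX vsX)
    finally show ?thesis .
  qed
  have e2: "mu (lam (h m n)) = (\<Sum>(m1, m2) \<leftarrow> hcomult M m. hmult P (mu m1)
      (\<Sum>(n1, n2) \<leftarrow> hcomult N n. hmult P (hmult P (nu n1) (mu (hantipode M m2))) (hantipode P (nu n2))))"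
    by (simp add: CS4a lin_sum_list[OF hm_lin[OF hm_mu]] hm_mult[OF hm_mu] e1 case_prod_beta')
  show ?thesis
    by (simp add: e2 lin_sum_list[OF md_lin_l[OF mdL]] lin_sum_list[OF md_lin_r[OF mdL]] md_mult[OF mdL] case_prod_beta')
qed

lemma lemmaCn: "(\<Sum>(n1, n2) \<leftarrow> hcomult N n. \<Sum>(c1, c2) \<leftarrow> hcomult N n1.
     actL A (actL (nu c1) (actL B (actL (hantipode P (nu c2)) (actL (nu n2) W)))))
   = actL A (actL (nu n) (actL B W))"
proof -
  let ?F = "\<lambda>c1 q. actL A (actL (nu c1) (actL B (actL q W)))"
  have "(\<Sum>(n1, n2) \<leftarrow> hcomult N n. \<Sum>(c1, c2) \<leftarrow> hcomult N n1.
     actL A (actL (nu c1) (actL B (actL (hantipode P (nu c2)) (actL (nu n2) W)))))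
   = (\<Sum>(c1, z) \<leftarrow> hcomult N n. \<Sum>(c2, n2) \<leftarrow> hcomult N z.
     actL A (actL (nu c1) (actL B (actL (hantipode P (nu c2)) (actL (nu n2) W)))))"
    by (rule SW_coassoc[OF ccN _ vsX(1), symmetric]) (intro trilinI RX vsX)
  also have "\<dots> = (\<Sum>(c1, z) \<leftarrow> hcomult N n. \<Sum>(c2, n2) \<leftarrow> hcomult N z.
     ?F c1 (hmult P (hantipode P (nu c2)) (nu n2)))"
    by (simp add: md_mult[OF mdL])
  also have "\<dots> = (\<Sum>(c1, z) \<leftarrow> hcomult N n. \<Sum>(q1, q2) \<leftarrow> hcomult P (nu z).
     ?F c1 (hmult P (hantipode P q1) q2))"
    by (rule arg_cong[where f=sum_list], rule map_cong[OF refl], clarify,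
        rule SW_hom[OF hm_nu ccP _ vsX(1), symmetric], intro bilinI RX vsX)
  also have "\<dots> = (\<Sum>(c1, z) \<leftarrow> hcomult N n. hscale L (hcounit N z) (?F c1 (hunit P)))"
    by (subst SW_antipode_l[OF ccP, where t="hscale L"]) (intro RX vsX, simp add: hm_counit[OF hm_nu])
  also have "\<dots> = actL A (actL (nu n) (actL B W))"
    by (simp add: md_unit[OF mdL]) (rule SW_counit_r[OF ccN], intro RX vsX)
  finally show ?thesis .
qed

lemma lemmaCm: "(\<Sum>(m1, m2) \<leftarrow> hcomult M m. \<Sum>(a1, a2) \<leftarrow> hcomult M m1.
     actL (mu a1) (actL V (actL (mu (hantipode M a2)) (actL (mu m2) l))))
   = actL (mu m) (actL V l)"
proof -
  have "(\<Sum>(m1, m2) \<leftarrow> hcomult M m. \<Sum>(a1, a2) \<leftarrow> hcomult M m1.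
     actL (mu a1) (actL V (actL (mu (hantipode M a2)) (actL (mu m2) l))))
   = (\<Sum>(a1, z) \<leftarrow> hcomult M m. \<Sum>(a2, m2) \<leftarrow> hcomult M z.
     actL (mu a1) (actL V (actL (mu (hantipode M a2)) (actL (mu m2) l))))"
    by (rule SW_coassoc[OF ccM _ vsX(1), symmetric]) (intro trilinI RX vsX)
  also have "\<dots> = (\<Sum>(a1, z) \<leftarrow> hcomult M m. \<Sum>(a2, m2) \<leftarrow> hcomult M z.
     actL (mu a1) (actL V (actL (mu (hmult M (hantipode M a2) m2)) l)))"
    by (simp add: md_mult[OF mdL] hm_mult[OF hm_mu])
  also have "\<dots> = (\<Sum>(a1, z) \<leftarrow> hcomult M m. hscale L (hcounit M z) (actL (mu a1) (actL V (actL (mu (hunit M)) l))))"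
    by (subst SW_antipode_l[OF ccM, where t="hscale L"]) (intro RX vsX, rule refl)
  also have "\<dots> = actL (mu m) (actL V l)"
    by (simp add: md_unit[OF mdL] hm_unit[OF hm_mu]) (rule SW_counit_r[OF ccM], intro RX vsX)
  finally show ?thesis .
qed

lemma lemmaC: "(\<Sum>(m1, m2) \<leftarrow> hcomult M m. \<Sum>(n1, n2) \<leftarrow> hcomult N n.
     actL (mu (lam (h m1 n1))) (actL (nu n2) (actL (mu m2) l))) = actL (mu m) (actL (nu n) l)"
proof -
  have "(\<Sum>(m1, m2) \<leftarrow> hcomult M m. \<Sum>(n1, n2) \<leftarrow> hcomult N n.
     actL (mu (lam (h m1 n1))) (actL (nu n2) (actL (mu m2) l)))
   = (\<Sum>(m1, m2) \<leftarrow> hcomult M m. \<Sum>(n1, n2) \<leftarrow> hcomult N n. \<Sum>(a1, a2) \<leftarrow> hcomult M m1. \<Sum>(c1, c2) \<leftarrow> hcomult N n1.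
      actL (mu a1) (actL (nu c1) (actL (mu (hantipode M a2)) (actL (hantipode P (nu c2)) (actL (nu n2) (actL (mu m2) l))))))"
    by (simp only: dh_act)
  also have "\<dots> = (\<Sum>(m1, m2) \<leftarrow> hcomult M m. \<Sum>(a1, a2) \<leftarrow> hcomult M m1. \<Sum>(n1, n2) \<leftarrow> hcomult N n. \<Sum>(c1, c2) \<leftarrow> hcomult N n1.
      actL (mu a1) (actL (nu c1) (actL (mu (hantipode M a2)) (actL (hantipode P (nu c2)) (actL (nu n2) (actL (mu m2) l))))))"
    by (rule arg_cong[where f=sum_list], rule map_cong[OF refl], clarify, rule sum_list_swap2)
  also have "\<dots> = (\<Sum>(m1, m2) \<leftarrow> hcomult M m. \<Sum>(a1, a2) \<leftarrow> hcomult M m1.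
      actL (mu a1) (actL (nu n) (actL (mu (hantipode M a2)) (actL (mu m2) l))))"
    by (simp only: lemmaCn)
  also have "\<dots> = actL (mu m) (actL (nu n) l)"
    by (rule lemmaCm)
  finally show ?thesis .
qed

lemma lemmaAh: "hmult L (h a b) x = (\<Sum>(a1, a2) \<leftarrow> hcomult M a. \<Sum>(b1, b2) \<leftarrow> hcomult N b.
    hmult L (actL (mu (lam (h a1 b1))) x) (h a2 b2))"
proof -
  have "hmult L (h a b) x = (\<Sum>(y1, y2) \<leftarrow> hcomult L (h a b). hmult L (actL (mu (lam y1)) x) y2)"
    by (rule lemmaA)
  also have "\<dots> = (\<Sum>(a1, a2) \<leftarrow> hcomult M a. \<Sum>(b1, b2) \<leftarrow> hcomult N b.
    hmult L (actL (mu (lam (h a1 b1))) x) (h a2 b2))"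
    by (rule SW_h[OF hco ccL _ vsX(1)]) (intro bilinI RX vsX)
  finally show ?thesis .
qed

lemma twoA5: "(\<Sum>(m1, m2) \<leftarrow> hcomult M m. \<Sum>(n1, n2) \<leftarrow> hcomult N n.
              hmult L (actL (mu m1) (actL (nu n1) l)) (h m2 n2)) =
          (\<Sum>(m1, m2) \<leftarrow> hcomult M m. \<Sum>(n1, n2) \<leftarrow> hcomult N n.
              hmult L (h m1 n1) (actL (nu n2) (actL (mu m2) l)))"
proof -
  let ?d = "\<lambda>y. mu (lam y)"
  have "(\<Sum>(m1, m2) \<leftarrow> hcomult M m. \<Sum>(n1, n2) \<leftarrow> hcomult N n.
              hmult L (h m1 n1) (actL (nu n2) (actL (mu m2) l)))
     = (\<Sum>(m1, m2) \<leftarrow> hcomult M m. \<Sum>(n1, n2) \<leftarrow> hcomult N n. \<Sum>(a, b) \<leftarrow> hcomult M m1. \<Sum>(c, e) \<leftarrow> hcomult N n1.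
          hmult L (actL (?d (h a c)) (actL (nu n2) (actL (mu m2) l))) (h b e))"
    by (simp only: lemmaAh)
  also have "\<dots> = (\<Sum>(m1, m2) \<leftarrow> hcomult M m. \<Sum>(a, b) \<leftarrow> hcomult M m1. \<Sum>(n1, n2) \<leftarrow> hcomult N n. \<Sum>(c, e) \<leftarrow> hcomult N n1.
          hmult L (actL (?d (h a c)) (actL (nu n2) (actL (mu m2) l))) (h b e))"
    by (rule arg_cong[where f=sum_list], rule map_cong[OF refl], clarify, rule sum_list_swap2)
  also have "\<dots> = (\<Sum>(m1, m2) \<leftarrow> hcomult M m. \<Sum>(a, b) \<leftarrow> hcomult M m1. \<Sum>(n1, n2) \<leftarrow> hcomult N n. \<Sum>(c, e) \<leftarrow> hcomult N n1.
          hmult L (actL (?d (h a c)) (actL (nu n2) (actL (mu b) l))) (h m2 e))"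
    by (rule SW_swap23[OF ccM _ vsX(1)]) (intro trilinI RX vsX)
  also have "\<dots> = (\<Sum>(m1, m2) \<leftarrow> hcomult M m. \<Sum>(a, b) \<leftarrow> hcomult M m1. \<Sum>(n1, n2) \<leftarrow> hcomult N n. \<Sum>(c, e) \<leftarrow> hcomult N n1.
          hmult L (actL (?d (h a c)) (actL (nu e) (actL (mu b) l))) (h m2 n2))"
    by (rule arg_cong[where f=sum_list], rule map_cong[OF refl], clarify,
        rule arg_cong[where f=sum_list], rule map_cong[OF refl], clarify,
        rule SW_swap23[OF ccN _ vsX(1)], intro trilinI RX vsX)
  also have "\<dots> = (\<Sum>(m1, m2) \<leftarrow> hcomult M m. \<Sum>(n1, n2) \<leftarrow> hcomult N n. \<Sum>(a, b) \<leftarrow> hcomult M m1. \<Sum>(c, e) \<leftarrow> hcomult N n1.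
          hmult L (actL (?d (h a c)) (actL (nu e) (actL (mu b) l))) (h m2 n2))"
    by (rule arg_cong[where f=sum_list], rule map_cong[OF refl], clarify, rule sum_list_swap2)
  also have "\<dots> = (\<Sum>(m1, m2) \<leftarrow> hcomult M m. \<Sum>(n1, n2) \<leftarrow> hcomult N n.
          hmult L (\<Sum>(a, b) \<leftarrow> hcomult M m1. \<Sum>(c, e) \<leftarrow> hcomult N n1.
             actL (?d (h a c)) (actL (nu e) (actL (mu b) l))) (h m2 n2))"
    by (simp add: lin_sum_list[OF cc_mult_lin_l[OF ccL]] case_prod_beta')
  also have "\<dots> = (\<Sum>(m1, m2) \<leftarrow> hcomult M m. \<Sum>(n1, n2) \<leftarrow> hcomult N n.
          hmult L (actL (mu m1) (actL (nu n1) l)) (h m2 n2))"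
    by (simp only: lemmaC)
  finally show ?thesis by simp
qed
end

theorem proposition2p5:
  fixes L :: "('k::field, 'l::ab_group_add) hopf" and M :: "('k, 'm::ab_group_add) hopf"
    and N :: "('k, 'n::ab_group_add) hopf" and P :: "('k, 'p::ab_group_add) hopf"
    and actL :: "'p \<Rightarrow> 'l \<Rightarrow> 'l" and actM :: "'p \<Rightarrow> 'm \<Rightarrow> 'm" and actN :: "'p \<Rightarrow> 'n \<Rightarrow> 'n"
    and h :: "'m \<Rightarrow> 'n \<Rightarrow> 'l" and lam :: "'l \<Rightarrow> 'm" and lam' :: "'l \<Rightarrow> 'n"
    and mu :: "'m \<Rightarrow> 'p" and nu :: "'n \<Rightarrow> 'p"
    and L2 :: "('k, 'l2::ab_group_add) hopf" and M2 :: "('k, 'm2::ab_group_add) hopf"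
    and N2 :: "('k, 'n2::ab_group_add) hopf" and P2 :: "('k, 'p2::ab_group_add) hopf"
    and actL2 :: "'p2 \<Rightarrow> 'l2 \<Rightarrow> 'l2" and actM2 :: "'p2 \<Rightarrow> 'm2 \<Rightarrow> 'm2"
    and actN2 :: "'p2 \<Rightarrow> 'n2 \<Rightarrow> 'n2"
    and h2 :: "'m2 \<Rightarrow> 'n2 \<Rightarrow> 'l2" and lam2 :: "'l2 \<Rightarrow> 'm2" and lam2' :: "'l2 \<Rightarrow> 'n2"
    and mu2 :: "'m2 \<Rightarrow> 'p2" and nu2 :: "'n2 \<Rightarrow> 'p2"
  assumes XS: "hopf_crossed_square L M N P actL actM actN h lam lam' mu nu"
    and XS2: "hopf_crossed_square L2 M2 N2 P2 actL2 actM2 actN2 h2 lam2 lam2' mu2 nu2"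
  shows "hopf_2action L M N P actL actM actN (\<lambda>m l. actL (mu m) l) (\<lambda>n l. actL (nu n) l) h
    \<and> (\<forall>\<alpha> \<beta> \<gamma> \<delta>.
         hopf_crossed_square_morphism L M N P actL actM actN h lam lam' mu nu
           L2 M2 N2 P2 actL2 actM2 actN2 h2 lam2 lam2' mu2 nu2 \<alpha> \<beta> \<gamma> \<delta>
         \<longrightarrow> hopf_2action_morphism L M N P actL actM actN
               (\<lambda>m l. actL (mu m) l) (\<lambda>n l. actL (nu n) l) h
               L2 M2 N2 P2 actL2 actM2 actN2
               (\<lambda>m l. actL2 (mu2 m) l) (\<lambda>n l. actL2 (nu2 n) l) h2 \<alpha> \<beta> \<gamma> \<delta>)"
proof (intro conjI allI impI)
  note F = XS_facts[OF XS]
  show "hopf_2action L M N P actL actM actN (\<lambda>m l. actL (mu m) l) (\<lambda>n l. actL (nu n) l) h"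
    unfolding hopf_2action_def
    using F module_pullback[OF F(9) F(7) F(2) F(4) F(1)] module_pullback[OF F(9) F(8) F(3) F(4) F(1)]
      twoA1[OF F(13) F(9) F(2) F(4) F(1)] twoA1[OF F(14) F(9) F(3) F(4) F(1)]
      CS3[OF XS] h_unit_l[OF XS] h_unit_r[OF XS] CS6a[OF XS] CS6b[OF XS] twoA5[OF XS]
    by simp
next
  fix \<alpha> \<beta> \<gamma> \<delta>
  assume "hopf_crossed_square_morphism L M N P actL actM actN h lam lam' mu nu
           L2 M2 N2 P2 actL2 actM2 actN2 h2 lam2 lam2' mu2 nu2 \<alpha> \<beta> \<gamma> \<delta>"
  then show "hopf_2action_morphism L M N P actL actM actN
               (\<lambda>m l. actL (mu m) l) (\<lambda>n l. actL (nu n) l) h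
               L2 M2 N2 P2 actL2 actM2 actN2
               (\<lambda>m l. actL2 (mu2 m) l) (\<lambda>n l. actL2 (nu2 n) l) h2 \<alpha> \<beta> \<gamma> \<delta>"
    unfolding hopf_crossed_square_morphism_def hopf_2action_morphism_def by simp
qed

end
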